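(* Let $i\geq 3$ be an integer and let $D$ be a strong digraph with $D\in\mathcal{LE}_i$. Then $D$ has a small quasi-kernel, i.e. an independent set $Q\subseteq V(D)$ with $|Q|\leq |V(D)|/2$ such that for every vertex $x\notin Q$ there is a directed path of length $1$ or $2$ from $x$ to some vertex of $Q$.
   Context: All digraphs are finite, without loops or multiple arcs. Paths and cycles are directed; the length of a path or cycle is its number of arcs. A set of vertices is independent if no two distinct vertices of it are joined by an arc. A digraph is strong if for every ordered pair of vertices $x,y$ there is a directed path from $x$ to $y$. For a subdigraph $H$ of a digraph $D$, an ear of $H$ in $D$ is either a directed path in $D$ whose two end vertices lie in $H$ and whose internal vertices do not lie in $H$, or a directed cycle in $D$ having exactly one vertex in $H$. An ear decomposition of a strong digraph $D$ is a sequence $(D_0,D_1,\ldots,D_k)$ of strong subdigraphs of $D$ such that $D_0$ is a directed cycle, $D_{j+1}=D_j\cup P_j$ where $P_j$ is an ear of $D_j$ in $D$ for every $j\in\{0,\ldots,k-1\}$, and $D_k=D$. For an integer $i\geq 1$, $\mathcal{LE}_i$ denotes the family of strong digraphs having an ear decomposition in which every ear has length at least $i$. *)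

theory Defs
  imports Main
begin

text \<open>A digraph is given by a finite vertex set V and an arc relation A \<subseteq> V \<times> V
  without loops (multiple arcs are impossible for a relation).\<close>
definition digraph :: "'a set \<Rightarrow> ('a \<times> 'a) set \<Rightarrow> bool" where
  "digraph V A \<longleftrightarrow> finite V \<and> A \<subseteq> V \<times> V \<and> (\<forall>v. (v, v) \<notin> A)"

definition strong :: "'a set \<Rightarrow> ('a \<times> 'a) set \<Rightarrow> bool" where
  "strong V A \<longleftrightarrow> (\<forall>x\<in>V. \<forall>y\<in>V. (x, y) \<in> A\<^sup>*)"

definition walk_arcs :: "'a list \<Rightarrow> ('a \<times> 'a) set" where
  "walk_arcs ws = set (zip ws (tl ws))"

text \<open>A directed path, given by its vertex sequence; its length is length ws - 1.\<close>
definition is_path :: "('a \<times> 'a) set \<Rightarrow> 'a list \<Rightarrow> bool" where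
  "is_path A ws \<longleftrightarrow> ws \<noteq> [] \<and> distinct ws \<and> walk_arcs ws \<subseteq> A"

text \<open>A directed cycle, given as closed vertex sequence v0 v1 ... v(k-1) v0 (k \<ge> 2);
  its length is k = length ws - 1.\<close>
definition is_cycle :: "('a \<times> 'a) set \<Rightarrow> 'a list \<Rightarrow> bool" where
  "is_cycle A ws \<longleftrightarrow> length ws \<ge> 3 \<and> hd ws = last ws \<and> distinct (tl ws) \<and> walk_arcs ws \<subseteq> A"

definition is_ear :: "('a \<times> 'a) set \<Rightarrow> 'a set \<Rightarrow> 'a list \<Rightarrow> bool" where
  "is_ear A H ws \<longleftrightarrow>
     (is_path A ws \<and> length ws \<ge> 2 \<and> hd ws \<in> H \<and> last ws \<in> H \<and>
        (\<forall>v \<in> set (butlast (tl ws)). v \<notin> H))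
   \<or> (is_cycle A ws \<and> card (set ws \<inter> H) = 1)"

text \<open>Subdigraphs (vertex set, arc set) obtainable from a directed cycle of D by
  successively adding ears of length at least i; these are exactly the D_j of an
  ear decomposition all of whose ears have length \<ge> i.\<close>
inductive ear_built :: "nat \<Rightarrow> 'a set \<Rightarrow> ('a \<times> 'a) set \<Rightarrow> 'a set \<Rightarrow> ('a \<times> 'a) set \<Rightarrow> bool"
  for i V A where
  start: "is_cycle A c \<Longrightarrow> set c \<subseteq> V \<Longrightarrow> ear_built i V A (set c) (walk_arcs c)"
| add_ear: "ear_built i V A H AH \<Longrightarrow> is_ear A H p \<Longrightarrow> set p \<subseteq> V \<Longrightarrow> length p - 1 \<ge> i
     \<Longrightarrow> ear_built i V A (H \<union> set p) (AH \<union> walk_arcs p)"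

definition LE :: "nat \<Rightarrow> 'a set \<Rightarrow> ('a \<times> 'a) set \<Rightarrow> bool" where
  "LE i V A \<longleftrightarrow> strong V A \<and> ear_built i V A V A"

definition independent :: "('a \<times> 'a) set \<Rightarrow> 'a set \<Rightarrow> bool" where
  "independent A Q \<longleftrightarrow> (\<forall>u\<in>Q. \<forall>v\<in>Q. u \<noteq> v \<longrightarrow> (u, v) \<notin> A)"

definition small_quasi_kernel :: "'a set \<Rightarrow> ('a \<times> 'a) set \<Rightarrow> 'a set \<Rightarrow> bool" where
  "small_quasi_kernel V A Q \<longleftrightarrow> Q \<subseteq> V \<and> independent A Q \<and> 2 * card Q \<le> card V \<and>
     (\<forall>x\<in>V - Q. \<exists>p. is_path A p \<and> hd p = x \<and> last p \<in> Q \<and> length p - 1 \<in> {1, 2})"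

end

theory Submission
  imports Defs
begin

definition reach :: "('a \<times> 'a) set \<Rightarrow> 'a set \<Rightarrow> 'a \<Rightarrow> bool" where
  "reach G T x \<longleftrightarrow> (\<exists>p. is_path G p \<and> hd p = x \<and> last p \<in> T \<and> length p - 1 \<in> {1, 2})"

lemma walk_arcs_simps[simp]:
  "walk_arcs [] = {}" "walk_arcs [a] = {}"
  "walk_arcs (a # b # xs) = insert (a, b) (walk_arcs (b # xs))"
  by (auto simp: walk_arcs_def)

lemma walk_arcs_append:
  "walk_arcs (xs @ ys) = walk_arcs xs \<union> walk_arcs ys \<union>
     (if xs = [] \<or> ys = [] then {} else {(last xs, hd ys)})"
proof (induction xs)
  case Nil then show ?case by simp
next
  case (Cons a xs)
  then show ?case by (cases xs; cases ys) auto
qed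

lemma walk_arcs_nth: "walk_arcs ws = {(ws!j, ws!Suc j) | j. Suc j < length ws}"
  unfolding walk_arcs_def set_zip by (auto simp: nth_tl)

lemma walk_arcs_sub: "walk_arcs ws \<subseteq> set ws \<times> set ws"
  unfolding walk_arcs_nth by (auto intro: nth_mem)

lemma reach_mono: "reach G T x \<Longrightarrow> G \<subseteq> G' \<Longrightarrow> T \<subseteq> T' \<Longrightarrow> reach G' T' x"
  unfolding reach_def is_path_def by blast

lemma reach1: "(x, y) \<in> G \<Longrightarrow> y \<in> T \<Longrightarrow> x \<noteq> y \<Longrightarrow> reach G T x"
  unfolding reach_def is_path_def by (rule exI[of _ "[x, y]"]) auto

lemma reach2: "(x, y) \<in> G \<Longrightarrow> (y, z) \<in> G \<Longrightarrow> z \<in> T \<Longrightarrow> distinct [x, y, z] \<Longrightarrow> reach G T x"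
  unfolding reach_def is_path_def by (rule exI[of _ "[x, y, z]"]) auto

lemma card_K: "3 * card {k. 1 \<le> k \<and> k \<le> n \<and> ((k::nat) + s) mod 3 = 0} + (n + s) mod 3 = n + s"
  if "s \<le> 2" for s :: nat
proof (induction n)
  case 0
  then show ?case using that by simp
next
  case (Suc n)
  have e: "{k. 1 \<le> k \<and> k \<le> Suc n \<and> (k + s) mod 3 = 0} =
    {k. 1 \<le> k \<and> k \<le> n \<and> (k + s) mod 3 = 0} \<union> (if (Suc n + s) mod 3 = 0 then {Suc n} else {})"
    by (auto simp: le_Suc_eq)
  show ?case
  proof (cases "(Suc n + s) mod 3 = 0")
    case True
    then have "card {k. 1 \<le> k \<and> k \<le> Suc n \<and> (k + s) mod 3 = 0} = 
       Suc (card {k. 1 \<le> k \<and> k \<le> n \<and> (k + s) mod 3 = 0})"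
      unfolding e by (simp add: card_insert_if)
    moreover have "(n + s) mod 3 = 2" using True by presburger
    ultimately show ?thesis using Suc True by simp
  next
    case False
    moreover have "(Suc n + s) mod 3 = Suc ((n + s) mod 3)" using False by presburger
    ultimately show ?thesis using Suc unfolding e by simp
  qed
qed

definition PJ :: "bool \<Rightarrow> nat \<Rightarrow> nat \<Rightarrow> nat \<Rightarrow> bool" where
  "PJ b m s j \<longleftrightarrow> (b \<and> (m + s) mod 3 = 0 \<and> j = 1) \<or>
     ((\<not> (b \<and> (m + s) mod 3 = 0) \<or> j \<noteq> 0) \<and> j < m \<and> (m - j + s) mod 3 = 0)"

lemma PJ_True: "PJ True m s j \<longleftrightarrow> ((m + s) mod 3 = 0 \<and> j = 1) \<or>
     (((m + s) mod 3 \<noteq> 0 \<or> j \<noteq> 0) \<and> j < m \<and> (m - j + s) mod 3 = 0)"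
  unfolding PJ_def by simp

lemma PJ_False: "PJ False m s j \<longleftrightarrow> j < m \<and> (m - j + s) mod 3 = 0"
  unfolding PJ_def by simp

lemma PJ_a: "PJ b m s j \<Longrightarrow> m \<ge> 1 \<Longrightarrow> s \<le> 2 \<Longrightarrow> m \<ge> 2 \<or> s = 0 \<Longrightarrow> j < m"
  by (induct b) (simp_all only: PJ_True PJ_False; presburger)+

lemma PJ_b: "PJ b m s j \<Longrightarrow> PJ b m s (Suc j) \<Longrightarrow> s \<le> 2 \<Longrightarrow> False"
  by (induct b) (simp_all only: PJ_True PJ_False; presburger)+

lemma PJ_c: "b \<Longrightarrow> \<not> PJ b m s 0"
  unfolding PJ_def by simp presburger

lemma PJ_d: "Suc j = m \<Longrightarrow> PJ b m s j \<Longrightarrow> s \<le> 2 \<Longrightarrow> s \<noteq> 0"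
  by (induct b) (simp_all only: PJ_True PJ_False; presburger)+

lemma mod3a: "(a::nat) mod 3 = 1 \<Longrightarrow> (a - 1) mod 3 = 0" by presburger
lemma mod3b: "(a::nat) mod 3 = 2 \<Longrightarrow> (a - 2) mod 3 = 0" by presburger

lemma PJ_e: "j < m \<Longrightarrow> \<not> PJ b m s j \<Longrightarrow> s \<le> 2 \<Longrightarrow>
  PJ b m s (Suc j) \<or> (Suc j = m \<and> s = 0) \<or> (PJ b m s (Suc (Suc j)) \<and> Suc j < m)
  \<or> (Suc (Suc j) = m \<and> s = 0) \<or> (Suc j = m \<and> s = 1)"
proof -
  assume a: "j < m" "\<not> PJ b m s j" "s \<le> 2"
  have s3: "s = 0 \<or> s = 1 \<or> s = 2" using a(3) by auto
  show ?thesis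
  proof (cases "b \<and> (m + s) mod 3 = 0 \<and> j = 0")
    case True
    then have "PJ b m s (Suc j)" unfolding PJ_def by simp
    then show ?thesis by simp
  next
    case False
    then have r: "(m - j + s) mod 3 \<noteq> 0" using a(1,2) unfolding PJ_def by auto
    have "(m - j + s) mod 3 < 3" by simp
    then consider "(m - j + s) mod 3 = 1" | "(m - j + s) mod 3 = 2" using r by linarith
    then show ?thesis
    proof cases
      case 1
      show ?thesis
      proof (cases "Suc j < m")
        case True
        have e: "m - Suc j + s = (m - j + s) - 1" using True by linarith
        have "(m - j + s - 1) mod 3 = 0" using 1 mod3a by blast
        then have "PJ b m s (Suc j)" using True e unfolding PJ_def by simp
        then show ?thesis by simp
      next
        case False
        then have "m - j + s = 1 + s" "Suc j = m" using a(1) by auto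
        then have "s = 0" using 1 s3 by auto
        then show ?thesis using \<open>Suc j = m\<close> by simp
      qed
    next
      case 2
      show ?thesis
      proof (cases "Suc j < m")
        case False
        then have "m - j + s = 1 + s" "Suc j = m" using a(1) by auto
        then have "s = 1" using 2 s3 by auto
        then show ?thesis using \<open>Suc j = m\<close> by simp
      next
        case True
        show ?thesis
        proof (cases "Suc (Suc j) < m")
          case True
          have e: "m - Suc (Suc j) + s = (m - j + s) - 2" using True by linarith
          have "(m - j + s - 2) mod 3 = 0" using 2 mod3b by blast
          then have "PJ b m s (Suc (Suc j))" using True e unfolding PJ_def by simp
          then show ?thesis using True by simp
        next
          case False
          then have "m - j + s = 2 + s" "Suc (Suc j) = m" using a(1) \<open>Suc j < m\<close> by auto
          then have "s = 0" using 2 s3 by auto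
          then show ?thesis using \<open>Suc (Suc j) = m\<close> by simp
        qed
      qed
    qed
  qed
qed

lemma count_arith: "3*c + (m+s) mod 3 = m + s \<Longrightarrow> s \<le> 2 \<Longrightarrow> m\<ge>1 \<Longrightarrow> (m \<ge> 2 \<or> s = 0) \<Longrightarrow>
   2*c \<le> m \<and> (s = 0 \<longrightarrow> 2*c+1 \<le> m)" for c m s :: nat
proof -
  assume a: "3*c + (m+s) mod 3 = m + s" "s \<le> 2" "m\<ge>1" "(m \<ge> 2 \<or> s = 0)"
  have r: "(m+s) mod 3 < 3" by simp
  show ?thesis
  proof (cases "m \<ge> 4")
    case True then show ?thesis using a r by linarith
  next
    case False
    then have "m = 1 \<or> m = 2 \<or> m = 3" "s = 0 \<or> s = 1 \<or> s = 2" using a by auto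
    then show ?thesis using a by auto
  qed
qed

lemma card_J: "s \<le> 2 \<Longrightarrow> m \<ge> 1 \<Longrightarrow> (m \<ge> 2 \<or> s = 0) \<Longrightarrow>
  2 * card {j. PJ b m s j} \<le> m \<and> (s = 0 \<longrightarrow> 2 * card {j. PJ b m s j} + 1 \<le> m)"
proof -
  assume a: "s \<le> 2" "m \<ge> 1" "m \<ge> 2 \<or> s = 0"
  define J where "J = {j. j < m \<and> (m - j + s) mod 3 = 0}"
  define K where "K = {k. 1 \<le> k \<and> k \<le> m \<and> (k + s) mod 3 = 0}"
  have fJ: "finite J" by (rule finite_subset[of _ "{..<m}"]) (auto simp: J_def)
  have fK: "finite K" by (rule finite_subset[of _ "{..m}"]) (auto simp: K_def)
  have "J \<subseteq> (\<lambda>k. m - k) ` K"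
  proof
    fix j assume "j \<in> J"
    then have j: "j < m" "(m - j + s) mod 3 = 0" unfolding J_def mem_Collect_eq by blast+
    then have "1 \<le> m - j" "m - j \<le> m" by auto
    then have "m - j \<in> K" unfolding K_def mem_Collect_eq using j(2) by blast
    moreover have "j = m - (m - j)" using j by simp
    ultimately show "j \<in> (\<lambda>k. m - k) ` K" by blast
  qed
  then have "card J \<le> card ((\<lambda>k. m - k) ` K)" using fK by (intro card_mono) auto
  also have "\<dots> \<le> card K" using card_image_le fK by blast
  finally have cJK: "card J \<le> card K" .
  have "card {j. PJ b m s j} \<le> card J"
  proof (cases "b \<and> (m + s) mod 3 = 0")
    case True
    have pj: "PJ b m s j \<longleftrightarrow> j = 1 \<or> (j \<noteq> 0 \<and> j \<in> J)" for j
      using True unfolding PJ_def J_def mem_Collect_eq by blast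
    have "{j. PJ b m s j} = insert 1 (J - {0})" using pj by blast
    moreover have "0 \<in> J" unfolding J_def mem_Collect_eq using True a(2) by simp
    moreover have "card (insert 1 (J - {0})) \<le> Suc (card (J - {0}))" using fJ by (simp add: card_insert_if)
    moreover have "Suc (card (J - {0})) = card J" using fJ \<open>0 \<in> J\<close> card_Suc_Diff1 by metis
    ultimately show ?thesis by simp
  next
    case False
    then have "{j. PJ b m s j} = J" unfolding J_def PJ_def by (intro Collect_cong) (metis (no_types))
    then show ?thesis by simp
  qed
  then have c: "card {j. PJ b m s j} \<le> card K" using cJK by linarith
  have "3 * card K + (m + s) mod 3 = m + s" unfolding K_def using card_K[OF a(1)] by blast
  from count_arith[OF this a] c show ?thesis by linarith
qed

lemma extend:
  fixes H :: "'a set" and AH :: "('a \<times> 'a) set" and Q :: "'a set" and h0 h1 :: 'a and us :: "'a list"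
  assumes AHs: "AH \<subseteq> H \<times> H" and QH: "Q \<subseteq> H" and ind: "independent AH Q"
    and rq: "\<forall>x\<in>H - Q. reach AH Q x"
    and h0: "h0 \<in> H" and h1: "h1 \<in> H" and dist: "distinct us" and disj: "set us \<inter> H = {}"
    and ne: "us \<noteq> []" and m2: "length us \<ge> 2 \<or> h1 \<in> Q"
  shows "\<exists>S. S \<subseteq> set us \<and> independent (AH \<union> walk_arcs (h0 # us @ [h1])) (Q \<union> S) \<and>
     2 * card S \<le> length us \<and> (h1 \<in> Q \<longrightarrow> 2 * card S + 1 \<le> length us) \<and>
     (\<forall>z \<in> (H \<union> set us) - (Q \<union> S). reach (AH \<union> walk_arcs (h0 # us @ [h1])) (Q \<union> S) z)"
proof -
  define m where "m = length us"
  define x where "x j = (if j < m then us ! j else h1)" for j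
  define W where "W = walk_arcs (h0 # us @ [h1])"
  define G where "G = AH \<union> W"
  define s :: nat where "s = (if h1 \<in> Q then 0 else if \<exists>y\<in>Q. (h1,y) \<in> AH then 1 else 2)"
  define b where "b = (h0 \<in> Q)"
  define J' where "J' = {j. PJ b m s j}"
  define S where "S = x ` J'"
  have m1: "m \<ge> 1" using ne m_def by (cases us) auto
  have s2: "s \<le> 2" by (simp add: s_def)
  have s0: "s = 0 \<longleftrightarrow> h1 \<in> Q" by (simp add: s_def)
  have s1: "s = 1 \<Longrightarrow> \<exists>y\<in>Q. (h1,y) \<in> AH" by (auto simp: s_def split: if_splits)
  have m2': "m \<ge> 2 \<or> s = 0" using m2 s0 m_def by auto
  have Jm: "j \<in> J' \<Longrightarrow> j < m" for j using PJ_a[of b m s j] m1 s2 m2' J'_def by auto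
  have h1us: "h1 \<notin> set us" using disj h1 by auto
  have xinj: "x j = x k \<Longrightarrow> j \<le> m \<Longrightarrow> k \<le> m \<Longrightarrow> j = k" for j k
  proof -
    assume e: "x j = x k" "j \<le> m" "k \<le> m"
    show "j = k"
    proof (cases "j < m"; cases "k < m")
      assume "j < m" "k < m" then show ?thesis using e dist m_def x_def nth_eq_iff_index_eq by auto
    next
      assume "j < m" "\<not> k < m" then show ?thesis using e h1us m_def x_def nth_mem by fastforce
    next
      assume "\<not> j < m" "k < m" then show ?thesis using e h1us m_def x_def nth_mem by fastforce
    next
      assume "\<not> j < m" "\<not> k < m" then show ?thesis using e by auto
    qed
  qed
  have xus: "j < m \<Longrightarrow> x j \<in> set us" for j by (simp add: x_def m_def)
  have xH: "j < m \<Longrightarrow> x j \<notin> H" for j using xus disj by auto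
  have xm: "x m = h1" by (simp add: x_def)
  have setus: "set us = x ` {..<m}"
    by (auto simp: x_def m_def in_set_conv_nth)
  have SH: "S \<inter> H = {}" using xH Jm S_def by auto
  have Sus: "S \<subseteq> set us" using xus Jm S_def by auto
  define ws where "ws = h0 # us @ [h1]"
  have lws: "length ws = Suc (Suc m)" by (simp add: ws_def m_def)
  have ws_nth0: "ws ! 0 = h0" by (simp add: ws_def)
  have ws_nth: "j \<le> m \<Longrightarrow> ws ! Suc j = x j" for j
    by (cases "j < m") (simp_all add: ws_def x_def nth_append m_def)
  have Wn: "W = {(ws!j, ws!Suc j) | j. Suc j < length ws}" unfolding W_def ws_def walk_arcs_nth ..
  have W1: "(h0, x 0) \<in> W" unfolding Wn
  proof -
    have "(h0, x 0) = (ws ! 0, ws ! Suc 0)" using ws_nth0 ws_nth[of 0] by simp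
    moreover have "Suc 0 < length ws" using lws by simp
    ultimately show "(h0, x 0) \<in> {(ws!j, ws!Suc j) | j. Suc j < length ws}" by blast
  qed
  have W2: "j < m \<Longrightarrow> (x j, x (Suc j)) \<in> W" for j unfolding Wn
  proof -
    assume "j < m"
    then have "(x j, x (Suc j)) = (ws ! Suc j, ws ! Suc (Suc j))"
      using ws_nth[of j] ws_nth[of "Suc j"] by simp
    moreover have "Suc (Suc j) < length ws" using lws \<open>j < m\<close> by simp
    ultimately show "(x j, x (Suc j)) \<in> {(ws!j, ws!Suc j) | j. Suc j < length ws}" by blast
  qed
  have W3: "(u, v) \<in> W \<Longrightarrow> (u, v) = (h0, x 0) \<or> (\<exists>j<m. u = x j \<and> v = x (Suc j))" for u v
  proof -
    assume "(u, v) \<in> W"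
    then obtain j where j: "Suc j < length ws" "u = ws ! j" "v = ws ! Suc j"
      unfolding Wn by blast
    show ?thesis
    proof (cases j)
      case 0 then show ?thesis using j ws_nth[of 0] ws_nth0 by simp
    next
      case (Suc j')
      then have "j' < m" using j lws by simp
      then have "u = x j'" "v = x (Suc j')" using j Suc ws_nth[of j'] ws_nth[of "Suc j'"] by simp_all
      then show ?thesis using \<open>j' < m\<close> by blast
    qed
  qed
  have inQS: "k \<le> m \<Longrightarrow> (k \<in> J' \<or> (k = m \<and> s = 0)) \<Longrightarrow> x k \<in> Q \<union> S" for k
    using s0 xm S_def by auto
  have memQS: "k \<le> m \<Longrightarrow> x k \<in> Q \<union> S \<Longrightarrow> (k \<in> J' \<or> (k = m \<and> s = 0))" for k
  proof -
    assume k: "k \<le> m" "x k \<in> Q \<union> S"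
    show ?thesis
    proof (cases "k < m")
      case True
      then have "x k \<notin> Q" using xH QH by auto
      then obtain j where "j \<in> J'" "x k = x j" using k S_def by auto
      then show ?thesis using xinj[of k j] Jm k by fastforce
    next
      case False
      then have "k = m" using k by auto
      then have "h1 \<in> Q" using k xm Sus h1us by auto
      then show ?thesis using s0 \<open>k = m\<close> by auto
    qed
  qed
  have indep: "independent G (Q \<union> S)"
    unfolding independent_def
  proof (intro ballI impI notI)
    fix u v assume uv: "u \<in> Q \<union> S" "v \<in> Q \<union> S" "u \<noteq> v" "(u, v) \<in> G"
    show False
    proof (cases "(u, v) \<in> AH")
      case True
      then have "u \<in> H" "v \<in> H" using AHs by auto
      then have "u \<in> Q" "v \<in> Q" using uv SH by auto
      then show False using ind True uv(3) unfolding independent_def by auto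
    next
      case False
      then have "(u, v) \<in> W" using uv G_def by auto
      from W3[OF this] show False
      proof
        assume e: "(u, v) = (h0, x 0)"
        then have "0 \<in> J' \<or> (0 = m \<and> s = 0)" using memQS[of 0] uv by auto
        then have "0 \<in> J'" using m1 by auto
        moreover have "h0 \<in> Q" using e uv SH h0 by auto
        ultimately show False using PJ_c[of b m s] b_def J'_def by auto
      next
        assume "\<exists>j<m. u = x j \<and> v = x (Suc j)"
        then obtain j where j: "j < m" "u = x j" "v = x (Suc j)" by auto
        have "j \<in> J'" using memQS[of j] j uv by auto
        moreover have "Suc j \<in> J' \<or> (Suc j = m \<and> s = 0)" using memQS[of "Suc j"] j uv by auto
        ultimately show False using PJ_b[of b m s j] PJ_d[of j m b s] s2 J'_def by auto
      qed
    qed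
  qed
  have reachnew: "reach G (Q \<union> S) (x j)" if j: "j < m" "j \<notin> J'" for j
  proof -
    have WG: "W \<subseteq> G" by (simp add: G_def)
    have "\<not> PJ b m s j" using j J'_def by auto
    from PJ_e[OF j(1) this s2] consider
      "Suc j \<in> J'" | "Suc j = m \<and> s = 0" | "Suc (Suc j) \<in> J' \<and> Suc j < m"
      | "Suc (Suc j) = m \<and> s = 0" | "Suc j = m \<and> s = 1"
      unfolding J'_def by blast
    then show ?thesis
    proof cases
      case 1
      have "Suc j \<le> m" using Jm[OF 1] by simp
      then have t: "x (Suc j) \<in> Q \<union> S" using inQS[of "Suc j"] 1 by blast
      have ne: "x j \<noteq> x (Suc j)" using xinj[of j "Suc j"] \<open>Suc j \<le> m\<close> by linarith
      have "(x j, x (Suc j)) \<in> G" using W2[OF j(1)] WG by blast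
      then show ?thesis using reach1 t ne by metis
    next
      case 2
      have t: "x (Suc j) \<in> Q \<union> S" using inQS[of "Suc j"] 2 by simp
      have ne: "x j \<noteq> x (Suc j)" using xinj[of j "Suc j"] 2 by linarith
      have "(x j, x (Suc j)) \<in> G" using W2[OF j(1)] WG by blast
      then show ?thesis using reach1 t ne by metis
    next
      case 3
      have l: "Suc (Suc j) < m" using Jm 3 by blast
      have t: "x (Suc (Suc j)) \<in> Q \<union> S" using inQS[of "Suc (Suc j)"] 3 l by simp
      have d: "distinct [x j, x (Suc j), x (Suc (Suc j))]"
        using xinj[of j "Suc j"] xinj[of j "Suc (Suc j)"] xinj[of "Suc j" "Suc (Suc j)"] l
        by auto
      have "(x j, x (Suc j)) \<in> G" "(x (Suc j), x (Suc (Suc j))) \<in> G"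
        using W2[OF j(1)] W2[of "Suc j"] 3 WG by blast+
      then show ?thesis using reach2 t d by metis
    next
      case 4
      have t: "x (Suc (Suc j)) \<in> Q \<union> S" using inQS[of "Suc (Suc j)"] 4 by simp
      have d: "distinct [x j, x (Suc j), x (Suc (Suc j))]"
        using xinj[of j "Suc j"] xinj[of j "Suc (Suc j)"] xinj[of "Suc j" "Suc (Suc j)"] 4
        by auto
      have "(x j, x (Suc j)) \<in> G" "(x (Suc j), x (Suc (Suc j))) \<in> G"
        using W2[OF j(1)] W2[of "Suc j"] 4 WG by auto
      then show ?thesis using reach2 t d by metis
    next
      case 5
      then obtain y where y: "y \<in> Q" "(h1, y) \<in> AH" using s1 by auto
      have "h1 \<notin> Q" using s0 5 by auto
      have "y \<in> H" using y QH by auto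
      then have "x j \<noteq> y" using xH[OF j(1)] by auto
      moreover have "x j \<noteq> h1" using xinj[of j m] xm j(1) by auto
      moreover have "h1 \<noteq> y" using \<open>h1 \<notin> Q\<close> y by auto
      ultimately have d: "distinct [x j, h1, y]" by simp
      have "(x j, h1) \<in> G" using W2[OF j(1)] 5 xm WG by auto
      moreover have "(h1, y) \<in> G" using y G_def by auto
      ultimately show ?thesis using reach2 d y(1) by (metis UnI1)
    qed
  qed
  have reachall: "\<forall>z \<in> (H \<union> set us) - (Q \<union> S). reach G (Q \<union> S) z"
  proof
    fix z assume z: "z \<in> (H \<union> set us) - (Q \<union> S)"
    show "reach G (Q \<union> S) z"
    proof (cases "z \<in> H")
      case True
      then have "reach AH Q z" using rq z by auto
      then show ?thesis by (rule reach_mono) (auto simp: G_def)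
    next
      case False
      then obtain j where j: "j < m" "z = x j" using z setus by auto
      then have "j \<notin> J'" using z S_def by auto
      then show ?thesis using reachnew j by auto
    qed
  qed
  have "card S \<le> card J'" unfolding S_def using Jm by (intro card_image_le) (auto intro: finite_subset[of _ "{..<m}"])
  moreover have "2 * card J' \<le> m \<and> (s = 0 \<longrightarrow> 2 * card J' + 1 \<le> m)"
    unfolding J'_def using card_J[OF s2 m1 m2'] by blast
  ultimately have fin: "2 * card S \<le> m \<and> (h1 \<in> Q \<longrightarrow> 2 * card S + 1 \<le> m)"
    using s0 by linarith
  have G_eq: "G = AH \<union> walk_arcs (h0 # us @ [h1])" by (simp add: G_def W_def)
  have all: "S \<subseteq> set us \<and> independent G (Q \<union> S) \<and>
     2 * card S \<le> m \<and> (h1 \<in> Q \<longrightarrow> 2 * card S + 1 \<le> m) \<and>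
     (\<forall>z \<in> (H \<union> set us) - (Q \<union> S). reach G (Q \<union> S) z)"
    using Sus indep reachall fin by (intro conjI) simp_all
  show ?thesis using all unfolding G_eq m_def by (rule exI)
qed

lemma cycle_rotate:
  assumes c: "is_cycle A ws" and h: "h \<in> set ws"
  shows "\<exists>us. set ws = insert h (set us) \<and> walk_arcs ws = walk_arcs (h # us @ [h]) \<and>
     distinct (us @ [h]) \<and> length us + 2 = length ws"
proof -
  have l3: "length ws \<ge> 3" and hl: "hd ws = last ws" and dt: "distinct (tl ws)"
    using c unfolding is_cycle_def by auto
  define cyc where "cyc = tl ws"
  have wsne: "ws \<noteq> []" using l3 by auto
  have ws: "ws = hd ws # cyc" using wsne cyc_def by simp
  have cne: "cyc \<noteq> []" using l3 cyc_def by (cases ws) auto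
  have hdl: "hd ws = last cyc" using hl ws cne by (metis last_ConsR)
  have hc: "h \<in> set cyc" using h ws hdl cne by (metis last_in_set set_ConsD)
  then obtain xs ys where xy: "cyc = xs @ h # ys" by (meson split_list)
  define us where "us = ys @ xs"
  have L: "last cyc = last (h # ys)" using xy by simp
  define L where "L = last (h # ys)"
  have "walk_arcs ws = walk_arcs ([L] @ (xs @ (h # ys)))"
    using ws hdl L xy L_def by simp
  also have A1: "\<dots> = walk_arcs (xs @ (h # ys)) \<union> {(L, hd (xs @ [h]))}"
    unfolding walk_arcs_append[of "[L]"] by (cases xs) simp_all
  also have A2: "walk_arcs (xs @ (h # ys)) = walk_arcs xs \<union> walk_arcs (h # ys) \<union> (if xs = [] then {} else {(last xs, h)})"
    unfolding walk_arcs_append[of xs] by simp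
  also have A4: "walk_arcs xs \<union> walk_arcs (h # ys) \<union> (if xs = [] then {} else {(last xs, h)}) \<union> {(L, hd (xs @ [h]))}
     = walk_arcs (h # ys) \<union> walk_arcs (xs @ [h]) \<union> {(L, hd (xs @ [h]))}"
    unfolding walk_arcs_append[of xs] by auto
  also have A3: "\<dots> = walk_arcs ((h # ys) @ (xs @ [h]))"
    unfolding walk_arcs_append[of "h # ys"] L_def by simp
  finally have W: "walk_arcs ws = walk_arcs (h # us @ [h])" by (simp add: us_def)
  have "set ws = insert h (set us)"
    using ws hdl cne xy us_def by (metis Un_insert_right list.simps(15) set_append last_in_set
        insert_absorb sup_commute)
  moreover have "distinct (us @ [h])" using dt xy cyc_def us_def by auto
  moreover have "length us + 2 = length ws" using ws xy us_def
    by (metis Suc_eq_plus1 add_Suc_right length_Cons length_append one_add_one add.commute)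
  ultimately show ?thesis using W by blast
qed

definition INV :: "'a set \<Rightarrow> ('a \<times> 'a) set \<Rightarrow> bool" where
  "INV H AH \<longleftrightarrow> finite H \<and> AH \<subseteq> H \<times> H \<and>
    (\<exists>Q. Q \<subseteq> H \<and> independent AH Q \<and> 2 * card Q \<le> card H \<and> (\<forall>x\<in>H - Q. reach AH Q x))"

lemma step_inv:
  assumes "INV H AH" and h0: "h0 \<in> H" and h1: "h1 \<in> H" and dist: "distinct us"
    and disj: "set us \<inter> H = {}" and l2: "length us \<ge> 2"
  shows "INV (H \<union> set us) (AH \<union> walk_arcs (h0 # us @ [h1]))"
proof -
  obtain Q where fin: "finite H" and AHs: "AH \<subseteq> H \<times> H" and Q: "Q \<subseteq> H" "independent AH Q"
    "2 * card Q \<le> card H" "\<forall>x\<in>H - Q. reach AH Q x"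
    using assms(1) unfolding INV_def by blast
  have ne: "us \<noteq> []" using l2 by auto
  obtain S where S: "S \<subseteq> set us" "independent (AH \<union> walk_arcs (h0 # us @ [h1])) (Q \<union> S)"
     "2 * card S \<le> length us"
     "\<forall>z \<in> (H \<union> set us) - (Q \<union> S). reach (AH \<union> walk_arcs (h0 # us @ [h1])) (Q \<union> S) z"
    using extend[OF AHs Q(1) Q(2) Q(4) h0 h1 dist disj ne] l2 by blast
  have disj': "H \<inter> set us = {}" using disj by blast
  have c: "card (H \<union> set us) = card H + length us"
    using card_Un_disjoint[OF fin finite_set disj'] distinct_card[OF dist] by simp
  have "card (Q \<union> S) \<le> card Q + card S" by (rule card_Un_le)
  then have "2 * card (Q \<union> S) \<le> card (H \<union> set us)" using c Q(3) S(3) by linarith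
  moreover have "walk_arcs (h0 # us @ [h1]) \<subseteq> (H \<union> set us) \<times> (H \<union> set us)"
    using walk_arcs_sub[of "h0 # us @ [h1]"] h0 h1 by auto
  ultimately show ?thesis unfolding INV_def using fin AHs Q(1) S(1,2,4)
    by (intro conjI exI[of _ "Q \<union> S"]) auto
qed

lemma butlast_tl: "length p \<ge> 2 \<Longrightarrow> p = hd p # butlast (tl p) @ [last p]"
  by (cases p) auto

lemma ear_inv: "ear_built i V A H AH \<Longrightarrow> i \<ge> 3 \<Longrightarrow> INV H AH"
proof (induction rule: ear_built.induct)
  case (start c)
  obtain us where us: "set c = insert (hd c) (set us)" "walk_arcs c = walk_arcs (hd c # us @ [hd c])"
     "distinct (us @ [hd c])" "length us + 2 = length c"
    using cycle_rotate[OF start(1), of "hd c"] start(1) unfolding is_cycle_def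
    by (metis hd_in_set list.size(3) not_numeral_le_zero)
  have l: "length c \<ge> 3" using start(1) unfolding is_cycle_def by auto
  have ne: "us \<noteq> []" using us(4) l by auto
  define h where "h = hd c"
  obtain S where S: "S \<subseteq> set us" "independent ({} \<union> walk_arcs (h # us @ [h])) ({h} \<union> S)"
     "2 * card S + 1 \<le> length us"
     "\<forall>z \<in> ({h} \<union> set us) - ({h} \<union> S). reach ({} \<union> walk_arcs (h # us @ [h])) ({h} \<union> S) z"
    using extend[of "{}" "{h}" "{h}" h h us] us(3) ne h_def
    unfolding independent_def by auto
  have hus: "h \<notin> set us" using us(3) h_def by auto
  have c: "card (set c) = Suc (length us)"
    using us(1,3) h_def hus by (simp add: distinct_card)
  have "card ({h} \<union> S) \<le> card {h} + card S" by (rule card_Un_le)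
  then have "2 * card ({h} \<union> S) \<le> card (set c)" using c S(3) by simp
  moreover have "walk_arcs c \<subseteq> set c \<times> set c" by (rule walk_arcs_sub)
  ultimately show ?case unfolding INV_def using S us(1,2) h_def
    by (intro conjI exI[of _ "{h} \<union> S"]) auto
next
  case (add_ear H AH p)
  have I: "INV H AH" using add_ear by blast
  have lp: "length p \<ge> 4" using add_ear by linarith
  from add_ear(2) show ?case unfolding is_ear_def
  proof
    assume a: "is_path A p \<and> 2 \<le> length p \<and> hd p \<in> H \<and> last p \<in> H \<and>
        (\<forall>v\<in>set (butlast (tl p)). v \<notin> H)"
    define us where "us = butlast (tl p)"
    have pe: "p = hd p # us @ [last p]" using butlast_tl[of p] lp us_def by simp
    have d: "distinct us" using a pe unfolding is_path_def
      by (metis distinct.simps(2) distinct_append)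
    have "length p = length us + 2" using arg_cong[OF pe, of length] by simp
    then have l2: "length us \<ge> 2" using lp by linarith
    have disj: "set us \<inter> H = {}" using a us_def by auto
    have "INV (H \<union> set us) (AH \<union> walk_arcs (hd p # us @ [last p]))"
      using step_inv[OF I _ _ d disj l2] a by blast
    moreover have "H \<union> set p = H \<union> set us"
    proof -
      have "set p = set (hd p # us @ [last p])" using pe by (rule arg_cong)
      then show ?thesis using a by auto
    qed
    moreover have "walk_arcs p = walk_arcs (hd p # us @ [last p])" using pe by (rule arg_cong)
    ultimately show ?thesis by simp
  next
    assume a: "is_cycle A p \<and> card (set p \<inter> H) = 1"
    then obtain h where h: "set p \<inter> H = {h}" using card_1_singletonE by metis
    then have hp: "h \<in> set p" "h \<in> H" by auto
    obtain us where us: "set p = insert h (set us)" "walk_arcs p = walk_arcs (h # us @ [h])"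
       "distinct (us @ [h])" "length us + 2 = length p"
      using cycle_rotate[of A p h] a hp by blast
    have d: "distinct us" using us(3) by simp
    have l2: "length us \<ge> 2" using lp us(4) by linarith
    have disj: "set us \<inter> H = {}" using h us(1,3) by auto
    have "INV (H \<union> set us) (AH \<union> walk_arcs (h # us @ [h]))"
      using step_inv[OF I hp(2) hp(2) d disj l2] by blast
    moreover have "H \<union> set p = H \<union> set us" using us(1) hp by auto
    ultimately show ?thesis using us(2) by simp
  qed
qed

theorem mainTheorem3:
  fixes V :: "'a set" and A :: "('a \<times> 'a) set" and i :: nat
  assumes "digraph V A" and "i \<ge> 3" and "strong V A" and "LE i V A"
  shows "\<exists>Q. small_quasi_kernel V A Q"
proof -
  have "ear_built i V A V A" using assms(4) unfolding LE_def by blast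
  then have "INV V A" using ear_inv assms(2) by blast
  then obtain Q where "Q \<subseteq> V" "independent A Q" "2 * card Q \<le> card V" "\<forall>x\<in>V - Q. reach A Q x"
    unfolding INV_def by blast
  then show ?thesis unfolding small_quasi_kernel_def reach_def by blast
qed

end
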